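(* Fix $\varphi\colon\{0,1\}^2\to\mathbb R$ and $\varepsilon\in(0,2)$. There exist constants $C>0$ and $\delta>0$ such that for every Erdős set $\mathscr B\subseteq\mathbb N$ with $1-d<\delta$, where $d=\prod_{b\in\mathscr B}(1-1/b)$, \[ \Big|\sum_{2\le\ell\le\min\mathscr B+1}\nu_\eta(\{y:y_0=0,\ y_1=\dots=y_{\ell-2}=1,\ y_{\ell-1}=0\})\log_2\Big(1+\frac{C_{0,0}^-}{C_{0,0}^+}\Big(\frac{\lambda_-}{\lambda_+}\Big)^{\ell-1}\Big)\Big|\le C(1-d)^{\varepsilon}. \]
   Context: $\mathscr B\subseteq\mathbb N$ is Erdős if it is infinite, pairwise coprime and $\sum_{b\in\mathscr B}1/b<\infty$. For $\mathscr B\subseteq\mathbb N$, $\mathcal F_{\mathscr B}=\mathbb Z\setminus\bigcup_{b\in\mathscr B}b\mathbb Z$, $\eta=\mathbf 1_{\mathcal F_{\mathscr B}}$. The Mirsky measure is $\nu_\eta=\Phi_*(m_H)$, where $H$ is the closure of $\{(n\bmod b)_{b\in\mathscr B}:n\in\mathbb Z\}$ in $\prod_{b\in\mathscr B}\mathbb Z/b\mathbb Z$, $m_H$ its Haar measure, and $\Phi(h)_n=1$ iff $h_b+n\not\equiv0\bmod b$ for all $b$; for Erdős $\mathscr B$, $\nu_\eta(\{y:y_0=1\})=d$. Let $\mathbf M=\begin{pmatrix}2^{\varphi(0,0)}&2^{\varphi(0,1)}\\2^{\varphi(1,0)}&2^{\varphi(1,1)}\end{pmatrix}$ with eigenvalues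 $\lambda_-<\lambda_+$, $\lambda_+>|\lambda_-|$; $C_{0,0}^\pm$ are the unique reals with $(\mathbf M^{n-1})_{0,0}=C_{0,0}^+\lambda_+^{n-1}+C_{0,0}^-\lambda_-^{n-1}$ for all $n\ge1$, with $C_{0,0}^+>0$. *)

theory Defs
  imports "HOL-Probability.Probability"
begin

definition erdos_set :: "nat set \<Rightarrow> bool" where
  "erdos_set B \<longleftrightarrow> 0 \<notin> B \<and> infinite B \<and> pairwise coprime B \<and>
     summable (\<lambda>n. if n \<in> B then 1 / real n else 0)"

definition erdos_d :: "nat set \<Rightarrow> real" where
  "erdos_d B = lim (\<lambda>N. \<Prod>b\<in>B \<inter> {..<N}. (1 - 1 / real b))"

text \<open>For pairwise coprime B the closure H of the diagonal
  image of Z is (by the Chinese remainder theorem) the full product of the Z/bZ,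
  so its Haar measure is the product of the uniform measures on {0..<b}.\<close>
definition haar_H :: "nat set \<Rightarrow> (nat \<Rightarrow> nat) measure" where
  "haar_H B = PiM B (\<lambda>b. uniform_count_measure {0..<b})"

definition Phi_B :: "nat set \<Rightarrow> (nat \<Rightarrow> nat) \<Rightarrow> int \<Rightarrow> bool" where
  "Phi_B B h = (\<lambda>n. \<forall>b\<in>B. \<not> (int b dvd int (h b) + n))"

definition mirsky :: "nat set \<Rightarrow> (int \<Rightarrow> bool) measure" where
  "mirsky B = distr (haar_H B) (PiM UNIV (\<lambda>_::int. count_space (UNIV :: bool set))) (Phi_B B)"

definition Mmat :: "(bool \<Rightarrow> bool \<Rightarrow> real) \<Rightarrow> real^2^2" where
  "Mmat \<phi> = (\<chi> i j. 2 powr \<phi> (i = 1) (j = 1))"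

definition lam_plus :: "(bool \<Rightarrow> bool \<Rightarrow> real) \<Rightarrow> real" where
  "lam_plus \<phi> = (let M = Mmat \<phi>; t = M$0$0 + M$1$1; dt = M$0$0 * M$1$1 - M$0$1 * M$1$0
                  in (t + sqrt (t^2 - 4*dt)) / 2)"

definition lam_minus :: "(bool \<Rightarrow> bool \<Rightarrow> real) \<Rightarrow> real" where
  "lam_minus \<phi> = (let M = Mmat \<phi>; t = M$0$0 + M$1$1; dt = M$0$0 * M$1$1 - M$0$1 * M$1$0
                  in (t - sqrt (t^2 - 4*dt)) / 2)"

definition Mpow :: "(bool \<Rightarrow> bool \<Rightarrow> real) \<Rightarrow> nat \<Rightarrow> real^2^2" where
  "Mpow \<phi> k = ((\<lambda>A. A ** Mmat \<phi>) ^^ k) (mat 1)"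

definition C00 :: "(bool \<Rightarrow> bool \<Rightarrow> real) \<Rightarrow> real \<times> real" where
  "C00 \<phi> = (THE c. \<forall>n\<ge>1. Mpow \<phi> (n - 1) $ 0 $ 0
              = fst c * lam_plus \<phi> ^ (n - 1) + snd c * lam_minus \<phi> ^ (n - 1))"

definition cyl :: "nat \<Rightarrow> (int \<Rightarrow> bool) set" where
  "cyl l = {y. y 0 = False \<and> (\<forall>i. 1 \<le> i \<and> i \<le> int l - 2 \<longrightarrow> y i) \<and> y (int l - 1) = False}"

end

theory Submission
  imports Defs
begin

definition Mu :: "nat \<Rightarrow> nat measure" where "Mu b = uniform_count_measure {0..<max b 1}"

lemma prob_Mu: "prob_space (Mu b)" unfolding Mu_def by (rule prob_space_uniform_count_measure) auto

lemma pps_Mu: "product_prob_space Mu"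
  unfolding product_prob_space_def product_prob_space_axioms_def product_sigma_finite_def
  using prob_Mu prob_space_imp_sigma_finite by blast

lemma haar_eq: assumes "0 \<notin> B" shows "haar_H B = PiM B Mu"
  unfolding haar_H_def
proof (rule PiM_cong)
  fix x assume "x \<in> B"
  with assms have "max x 1 = x" by (cases x) auto
  then show "uniform_count_measure {0..<x} = Mu x" by (simp add: Mu_def)
qed simp

lemma space_Mu: "space (Mu b) = {0..<max b 1}" by (simp add: Mu_def space_uniform_count_measure)
lemma sets_Mu: "sets (Mu b) = Pow {0..<max b 1}" by (simp add: Mu_def sets_uniform_count_measure)

lemma sets_coord: "b \<in> B \<Longrightarrow> {h \<in> space (PiM B Mu). P (h b)} \<in> sets (PiM B Mu)"
  by (intro sets_Collect_single') (auto simp: sets_Mu space_Mu)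

lemma space_bound: "h \<in> space (PiM B Mu) \<Longrightarrow> b \<in> B \<Longrightarrow> h b < max b 1"
  by (auto simp: space_PiM space_Mu PiE_def Pi_def)

lemma Phi_coord_meas: "(\<lambda>h. Phi_B B h n) \<in> measurable (PiM B Mu) (count_space UNIV)"
proof -
  have "{h \<in> space (PiM B Mu). \<forall>b\<in>B. \<not> (int b dvd int (h b) + n)}
      = {h \<in> space (PiM B Mu). \<forall>b\<in>B. (b \<in> B \<longrightarrow> \<not> (int b dvd int (h b) + n))}" by auto
  also have "\<dots> \<in> sets (PiM B Mu)"
  proof (rule sets.sets_Collect_countable_Ball)
    fix b show "{h \<in> space (PiM B Mu). b \<in> B \<longrightarrow> \<not> (int b dvd int (h b) + n)} \<in> sets (PiM B Mu)"
      by (cases "b \<in> B") (auto intro: sets_coord)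
  qed
  finally have "Measurable.pred (PiM B Mu) (\<lambda>h. \<forall>b\<in>B. \<not> (int b dvd int (h b) + n))"
    by (simp add: pred_def)
  then show ?thesis unfolding Phi_B_def pred_def[symmetric] by simp
qed

lemma Phi_meas: "Phi_B B \<in> measurable (PiM B Mu) (PiM UNIV (\<lambda>_::int. count_space (UNIV::bool set)))"
proof -
  have "(\<lambda>h n. Phi_B B h n) \<in> measurable (PiM B Mu) (PiM UNIV (\<lambda>_::int. count_space (UNIV::bool set)))"
    by (rule measurable_PiM_single') (auto intro: Phi_coord_meas)
  then show ?thesis by simp
qed

lemma sets_Phi: "{h \<in> space (PiM B Mu). P (Phi_B B h n)} \<in> sets (PiM B Mu)"
proof -
  have "(\<lambda>h. P (Phi_B B h n)) \<in> measurable (PiM B Mu) (count_space UNIV)"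
    using measurable_compose[OF Phi_coord_meas[of B n], of P "count_space UNIV"] by simp
  then show ?thesis by (simp add: pred_def[symmetric])
qed

lemma maxb: "0 \<notin> B \<Longrightarrow> (b::nat) \<in> B \<Longrightarrow> max b 1 = b" by (cases b) (auto simp: max_def)

lemma ennfrac: "0 < b \<Longrightarrow> (of_nat a / of_nat (card {0..<b}) :: ennreal) = ennreal (real a / real b)"
proof -
  assume "0 < b"
  have "(of_nat a / of_nat (card {0..<b}) :: ennreal) = ennreal (real a) / ennreal (real b)"
    by (simp only: card_atLeastLessThan diff_zero ennreal_of_nat_eq_real_of_nat)
  also have "\<dots> = ennreal (real a / real b)" using \<open>0 < b\<close> by (intro divide_ennreal) auto
  finally show ?thesis .
qed

lemma meas1:
  assumes "0 \<notin> B" "b \<in> B"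
  shows "measure (PiM B Mu) {h \<in> space (PiM B Mu). P (h b)} = card {x. x < b \<and> P x} / b"
proof -
  interpret P: product_prob_space Mu B by (rule pps_Mu)
  have mb: "max b 1 = b" using maxb[OF assms] .
  have "{h \<in> space (PiM B Mu). P (h b)} = {h \<in> space (PiM B Mu). h b \<in> {x. x < b \<and> P x}}"
    using space_bound[of _ B b] assms mb by auto
  also have "emeasure (PiM B Mu) \<dots> = emeasure (Mu b) {x. x < b \<and> P x}"
    by (rule P.emeasure_PiM_Collect_single) (use assms mb in \<open>auto simp: sets_Mu\<close>)
  also have "\<dots> = card {x. x < b \<and> P x} / card {0..<b}"
    unfolding Mu_def mb by (rule emeasure_uniform_count_measure) auto
  finally show ?thesis by (simp add: P.emeasure_eq_measure measure_nonneg)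
qed

lemma meas2:
  assumes "0 \<notin> B" "b \<in> B" "c \<in> B" "b \<noteq> c"
  shows "measure (PiM B Mu) {h \<in> space (PiM B Mu). P (h b) \<and> Q (h c)}
     = card {x. x < b \<and> P x} / b * (card {x. x < c \<and> Q x} / c)"
proof -
  interpret P: product_prob_space Mu B by (rule pps_Mu)
  have mb: "max b 1 = b" "max c 1 = c" using maxb[OF assms(1,2)] maxb[OF assms(1,3)] by auto
  define X where "X = (\<lambda>i. if i = b then {x. x < b \<and> P x} else {x. x < c \<and> Q x})"
  have e1: "{h \<in> space (PiM B Mu). P (h b) \<and> Q (h c)} = {h \<in> space (PiM B Mu). \<forall>i\<in>{b,c}. h i \<in> X i}"
    using space_bound[of _ B b] space_bound[of _ B c] assms mb by (auto simp: X_def)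
  have e2: "emeasure (PiM B Mu) {h \<in> space (PiM B Mu). \<forall>i\<in>{b,c}. h i \<in> X i} = (\<Prod>i\<in>{b,c}. emeasure (Mu i) (X i))"
    by (rule P.emeasure_PiM_Collect) (use assms mb in \<open>auto simp: sets_Mu X_def\<close>)
  have e3: "(\<Prod>i\<in>{b,c}. emeasure (Mu i) (X i)) = emeasure (Mu b) (X b) * emeasure (Mu c) (X c)" using assms by simp
  have eb: "emeasure (Mu b) (X b) = ennreal (card {x. x < b \<and> P x} / b)"
  proof -
    have "emeasure (Mu b) (X b) = emeasure (uniform_count_measure {0..<b}) {x. x < b \<and> P x}"
      unfolding Mu_def X_def mb by simp
    also have "\<dots> = card {x. x < b \<and> P x} / card {0..<b}"
      by (rule emeasure_uniform_count_measure) auto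
    also have "\<dots> = ennreal (card {x. x < b \<and> P x} / b)"
      by simp
    finally show ?thesis .
  qed
  have ec: "emeasure (Mu c) (X c) = ennreal (card {x. x < c \<and> Q x} / c)"
  proof -
    have "emeasure (Mu c) (X c) = emeasure (uniform_count_measure {0..<c}) {x. x < c \<and> Q x}"
      using assms unfolding Mu_def X_def mb by simp
    also have "\<dots> = card {x. x < c \<and> Q x} / card {0..<c}"
      by (rule emeasure_uniform_count_measure) auto
    also have "\<dots> = ennreal (card {x. x < c \<and> Q x} / c)"
      by simp
    finally show ?thesis .
  qed
  have e4: "ennreal (card {x. x < b \<and> P x} / b) * ennreal (card {x. x < c \<and> Q x} / c)
      = ennreal (card {x. x < b \<and> P x} / b * (card {x. x < c \<and> Q x} / c))"
    by (rule ennreal_mult'[symmetric]) simp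
  have "emeasure (PiM B Mu) {h \<in> space (PiM B Mu). P (h b) \<and> Q (h c)}
      = ennreal (card {x. x < b \<and> P x} / b * (card {x. x < c \<and> Q x} / c))"
    unfolding e1 e2 e3 eb ec e4 ..
  then show ?thesis
    by (simp add: P.emeasure_eq_measure)
qed

definition fB :: "nat set \<Rightarrow> nat \<Rightarrow> real" where "fB B n = (if n \<in> B then 1 / real n else 0)"
definition SB :: "nat set \<Rightarrow> real" where "SB B = suminf (fB B)"

lemma fB_nonneg: "0 \<le> fB B n" by (simp add: fB_def)

lemma SB_nonneg: "summable (fB B) \<Longrightarrow> 0 \<le> SB B"
  unfolding SB_def by (rule suminf_nonneg) (auto simp: fB_nonneg)

lemma Phi_int: "Phi_B B h (int k) \<longleftrightarrow> (\<forall>b\<in>B. \<not> b dvd h b + k)"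
  by (simp add: Phi_B_def flip: of_nat_add)

lemma card_le1_a: "card {x::nat. x < b \<and> b dvd x} \<le> 1"
proof -
  have "{x::nat. x < b \<and> b dvd x} \<subseteq> {0}" by (auto dest: dvd_imp_le)
  then have "card {x::nat. x < b \<and> b dvd x} \<le> card {0::nat}" by (intro card_mono) auto
  then show ?thesis by simp
qed

lemma card_le1_b: "card {x::nat. x < c \<and> c dvd x + k} \<le> 1"
proof -
  have "\<forall>x\<in>{x::nat. x < c \<and> c dvd x + k}. \<forall>y\<in>{x::nat. x < c \<and> c dvd x + k}. x = y"
  proof (intro ballI)
    fix x y assume x: "x \<in> {x::nat. x < c \<and> c dvd x + k}" and y: "y \<in> {x::nat. x < c \<and> c dvd x + k}"
    have *: "x = y" if "x \<le> y" "x < c" "y < c" "c dvd x + k" "c dvd y + k" for x y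
    proof -
      have "c dvd (y + k) - (x + k)" using that dvd_diff_nat by blast
      then have "c dvd y - x" by simp
      moreover have "y - x < c" using that by linarith
      ultimately have "y - x = 0"
      proof -
        assume d: "c dvd y - x" and l: "y - x < c"
        show "y - x = 0"
        proof (rule ccontr)
          assume "y - x \<noteq> 0"
          then have "c \<le> y - x" using d by (simp add: dvd_imp_le)
          then show False using l by simp
        qed
      qed
      then show ?thesis using that by simp
    qed
    show "x = y" using x y *[of x y] *[of y x] by (cases "x \<le> y") auto
  qed
  then show ?thesis using card_le_Suc0_iff_eq[of "{x::nat. x < c \<and> c dvd x + k}"] by simp
qed

lemma pair_bound:
  assumes "0 \<notin> B" "1 \<le> k" "\<forall>b\<in>B. k \<le> b"
  shows "measure (PiM B Mu) {h \<in> space (PiM B Mu). b \<in> B \<and> c \<in> B \<and> b dvd h b \<and> c dvd h c + k}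
     \<le> fB B b * fB B c + (if b = c \<and> b = k then fB B b else 0)"
proof (cases "b \<in> B \<and> c \<in> B")
  case False
  then have "{h \<in> space (PiM B Mu). b \<in> B \<and> c \<in> B \<and> b dvd h b \<and> c dvd h c + k} = {}" by auto
  then have z: "measure (PiM B Mu) {h \<in> space (PiM B Mu). b \<in> B \<and> c \<in> B \<and> b dvd h b \<and> c dvd h c + k} = 0"
    by (simp only: measure_empty)
  have "0 \<le> fB B b * fB B c + (if b = c \<and> b = k then fB B b else 0)" by (simp add: fB_nonneg)
  then show ?thesis unfolding z .
next
  case True
  then have bB: "b \<in> B" and cB: "c \<in> B" by auto
  have bpos: "0 < b" "0 < c" using assms True by (auto intro: gr0I)
  show ?thesis
  proof (cases "b = c")
    case bc: True
    show ?thesis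
    proof (cases "b = k")
      case bk: True
      have "measure (PiM B Mu) {h \<in> space (PiM B Mu). b \<in> B \<and> c \<in> B \<and> b dvd h b \<and> c dvd h c + k}
          \<le> measure (PiM B Mu) {h \<in> space (PiM B Mu). b dvd h b}"
      proof -
        interpret P: product_prob_space Mu B by (rule pps_Mu)
        show ?thesis by (rule P.finite_measure_mono) (auto intro: sets_coord[OF bB])
      qed
      also have "\<dots> = card {x. x < b \<and> b dvd x} / b" by (rule meas1[OF assms(1) bB])
      also have "\<dots> \<le> 1 / b" using card_le1_a[of b] bpos by (simp add: divide_right_mono)
      also have "\<dots> = fB B b" using bB by (simp add: fB_def)
      finally have m: "measure (PiM B Mu) {h \<in> space (PiM B Mu). b \<in> B \<and> c \<in> B \<and> b dvd h b \<and> c dvd h c + k} \<le> fB B b" .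
      have "(if b = c \<and> b = k then fB B b else 0) = fB B b" using bc bk by simp
      moreover have "0 \<le> fB B b * fB B c" by (simp add: fB_nonneg)
      ultimately show ?thesis using m by linarith
    next
      case bk: False
      have "{h \<in> space (PiM B Mu). b \<in> B \<and> c \<in> B \<and> b dvd h b \<and> c dvd h c + k} = {}"
      proof (rule ccontr)
        assume "\<not> ?thesis"
        then obtain h where "b dvd h b" "b dvd h b + k" using bc by auto
        then have "b dvd k" by (simp add: dvd_add_right_iff)
        then have "b \<le> k" using assms(2) by (auto dest: dvd_imp_le)
        then show False using assms(3) bB bk by force
      qed
      then have z: "measure (PiM B Mu) {h \<in> space (PiM B Mu). b \<in> B \<and> c \<in> B \<and> b dvd h b \<and> c dvd h c + k} = 0"
        by (simp only: measure_empty)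
      have "0 \<le> fB B b * fB B c + (if b = c \<and> b = k then fB B b else 0)" by (simp add: fB_nonneg)
      then show ?thesis unfolding z .
    qed
  next
    case bc: False
    have "measure (PiM B Mu) {h \<in> space (PiM B Mu). b \<in> B \<and> c \<in> B \<and> b dvd h b \<and> c dvd h c + k}
        = measure (PiM B Mu) {h \<in> space (PiM B Mu). b dvd h b \<and> c dvd h c + k}"
      using True by simp
    also have "\<dots> = card {x. x < b \<and> b dvd x} / b * (card {x. x < c \<and> c dvd x + k} / c)"
      by (rule meas2[OF assms(1) bB cB bc])
    also have "\<dots> \<le> (1 / b) * (1 / c)"
      using card_le1_a[of b] card_le1_b[of c k] bpos
      by (intro mult_mono divide_right_mono) auto
    finally show ?thesis using bB cB bc by (simp add: fB_def)
  qed
qed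

lemma D_bound:
  assumes "0 \<notin> B" "summable (fB B)" "1 \<le> k" "\<forall>b\<in>B. k \<le> b"
  shows "measure (PiM B Mu) {h \<in> space (PiM B Mu). b \<in> B \<and> b dvd h b \<and> \<not> Phi_B B h (int k)}
     \<le> fB B b * SB B + (if b = k then fB B b else 0)"
proof -
  interpret P: product_prob_space Mu B by (rule pps_Mu)
  define A where "A c = {h \<in> space (PiM B Mu). b \<in> B \<and> c \<in> B \<and> b dvd h b \<and> c dvd h c + k}" for c
  define g where "g c = (if c = k then fB B c else 0)" for c
  define a where "a c = fB B b * fB B c + (if c = b then g c else 0)" for c
  have Asets: "A c \<in> sets (PiM B Mu)" for c
  proof (cases "b \<in> B \<and> c \<in> B")
    case True
    then have "A c = {h \<in> space (PiM B Mu). b dvd h b} \<inter> {h \<in> space (PiM B Mu). c dvd h c + k}"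
      by (auto simp: A_def)
    then show ?thesis using True by (auto intro!: sets.Int sets_coord)
  next
    case False
    then have "A c = {}" by (auto simp: A_def)
    then show ?thesis by simp
  qed
  have Ab: "measure (PiM B Mu) (A c) \<le> a c" for c
  proof -
    have "(if b = c \<and> b = k then fB B b else 0) = (if c = b then g c else 0)" by (auto simp: g_def)
    then show ?thesis using pair_bound[OF assms(1,3,4), of b c] by (simp add: A_def a_def)
  qed
  have asums: "a sums (fB B b * SB B + g b)"
    unfolding a_def SB_def
    by (intro sums_add sums_mult summable_sums assms(2) sums_single)
  have Asum: "summable (\<lambda>c. measure (PiM B Mu) (A c))"
    by (rule summable_comparison_test'[OF sums_summable[OF asums], of 0]) (simp add: Ab)
  have D: "{h \<in> space (PiM B Mu). b \<in> B \<and> b dvd h b \<and> \<not> Phi_B B h (int k)} \<subseteq> (\<Union>c. A c)"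
    by (auto simp: A_def Phi_int)
  have "measure (PiM B Mu) {h \<in> space (PiM B Mu). b \<in> B \<and> b dvd h b \<and> \<not> Phi_B B h (int k)}
      \<le> measure (PiM B Mu) (\<Union>c. A c)"
    by (rule P.finite_measure_mono[OF D]) (use Asets in auto)
  also have "\<dots> \<le> (\<Sum>c. measure (PiM B Mu) (A c))"
    by (rule P.finite_measure_subadditive_countably) (use Asets Asum in auto)
  also have "\<dots> \<le> (\<Sum>c. a c)"
    by (rule suminf_le[OF Ab Asum sums_summable[OF asums]])
  also have "\<dots> = fB B b * SB B + g b" using asums by (simp add: sums_iff)
  finally show ?thesis by (simp add: g_def)
qed

lemma E_bound:
  assumes "0 \<notin> B" "summable (fB B)" "1 \<le> k" "\<forall>b\<in>B. k \<le> b"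
  shows "measure (PiM B Mu) {h \<in> space (PiM B Mu). \<not> Phi_B B h 0 \<and> \<not> Phi_B B h (int k)}
     \<le> SB B * SB B + fB B k"
proof -
  interpret P: product_prob_space Mu B by (rule pps_Mu)
  define D where "D b = {h \<in> space (PiM B Mu). b \<in> B \<and> b dvd h b \<and> \<not> Phi_B B h (int k)}" for b
  define a where "a b = fB B b * SB B + (if b = k then fB B b else 0)" for b
  have Dsets: "D b \<in> sets (PiM B Mu)" for b
  proof (cases "b \<in> B")
    case True
    then have "D b = {h \<in> space (PiM B Mu). b dvd h b} \<inter> {h \<in> space (PiM B Mu). \<not> Phi_B B h (int k)}"
      by (auto simp: D_def)
    then show ?thesis using True by (auto intro!: sets.Int sets_coord sets_Phi)
  next
    case False
    then have "D b = {}" by (auto simp: D_def)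
    then show ?thesis by simp
  qed
  have Db: "measure (PiM B Mu) (D b) \<le> a b" for b
    unfolding D_def a_def by (rule D_bound[OF assms])
  have asums: "a sums (SB B * SB B + fB B k)"
    unfolding a_def
    by (intro sums_add sums_mult2 sums_single) (simp add: SB_def summable_sums assms(2))
  have Dsum: "summable (\<lambda>b. measure (PiM B Mu) (D b))"
    by (rule summable_comparison_test'[OF sums_summable[OF asums], of 0]) (simp add: Db)
  have Phi0: "Phi_B B h 0 \<longleftrightarrow> (\<forall>b\<in>B. \<not> b dvd h b)" for h
    using Phi_int[of B h 0] by simp
  have E: "{h \<in> space (PiM B Mu). \<not> Phi_B B h 0 \<and> \<not> Phi_B B h (int k)} \<subseteq> (\<Union>b. D b)"
    by (auto simp: D_def Phi0)
  have "measure (PiM B Mu) {h \<in> space (PiM B Mu). \<not> Phi_B B h 0 \<and> \<not> Phi_B B h (int k)}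
      \<le> measure (PiM B Mu) (\<Union>b. D b)"
    by (rule P.finite_measure_mono[OF E]) (use Dsets in auto)
  also have "\<dots> \<le> (\<Sum>b. measure (PiM B Mu) (D b))"
    by (rule P.finite_measure_subadditive_countably) (use Dsets Dsum in auto)
  also have "\<dots> \<le> (\<Sum>b. a b)"
    by (rule suminf_le[OF Db Dsum sums_summable[OF asums]])
  also have "\<dots> = SB B * SB B + fB B k" using asums by (simp add: sums_iff)
  finally show ?thesis .
qed

lemma cyl_bound:
  assumes "erdos_set B" "2 \<le> l" "l \<le> Inf B + 1"
  shows "measure (mirsky B) (cyl l) \<le> SB B * SB B + fB B (l - 1)"
proof -
  interpret P: product_prob_space Mu B by (rule pps_Mu)
  have B0: "0 \<notin> B" using assms(1) by (simp add: erdos_set_def)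
  have sf: "summable (fB B)" using assms(1) by (simp add: erdos_set_def fB_def[abs_def])
  define k where "k = l - 1"
  have k1: "1 \<le> k" using assms(2) by (simp add: k_def)
  have kb: "\<forall>b\<in>B. k \<le> b"
  proof
    fix b assume "b \<in> B"
    then have "Inf B \<le> b" by (intro cInf_lower) auto
    then show "k \<le> b" using assms(3) by (simp add: k_def)
  qed
  have lk: "int l - 1 = int k" using assms(2) by (simp add: k_def)
  let ?N = "PiM UNIV (\<lambda>_::int. count_space (UNIV :: bool set))"
  have mir: "mirsky B = distr (PiM B Mu) ?N (Phi_B B)"
    by (simp add: mirsky_def haar_eq[OF B0])
  have nn: "0 \<le> SB B * SB B + fB B (l - 1)" using SB_nonneg[OF sf] fB_nonneg[of B "l - 1"] by simp
  show ?thesis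
  proof (cases "cyl l \<in> sets ?N")
    case True
    have "measure (mirsky B) (cyl l) = measure (PiM B Mu) (Phi_B B -` cyl l \<inter> space (PiM B Mu))"
      unfolding mir by (rule measure_distr[OF Phi_meas True])
    also have "\<dots> \<le> measure (PiM B Mu) {h \<in> space (PiM B Mu). \<not> Phi_B B h 0 \<and> \<not> Phi_B B h (int k)}"
    proof (rule P.finite_measure_mono)
      show "Phi_B B -` cyl l \<inter> space (PiM B Mu) \<subseteq> {h \<in> space (PiM B Mu). \<not> Phi_B B h 0 \<and> \<not> Phi_B B h (int k)}"
        by (auto simp: cyl_def lk)
      show "{h \<in> space (PiM B Mu). \<not> Phi_B B h 0 \<and> \<not> Phi_B B h (int k)} \<in> sets (PiM B Mu)"
      proof -
        have "{h \<in> space (PiM B Mu). \<not> Phi_B B h 0 \<and> \<not> Phi_B B h (int k)}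
          = {h \<in> space (PiM B Mu). \<not> Phi_B B h 0} \<inter> {h \<in> space (PiM B Mu). \<not> Phi_B B h (int k)}" by auto
        then show ?thesis by (auto intro!: sets.Int sets_Phi)
      qed
    qed
    also have "\<dots> \<le> SB B * SB B + fB B k" by (rule E_bound[OF B0 sf k1 kb])
    finally show ?thesis by (simp add: k_def)
  next
    case False
    then have "cyl l \<notin> sets (mirsky B)" unfolding mir by simp
    then have "measure (mirsky B) (cyl l) = 0" by (rule measure_notin_sets)
    then show ?thesis using nn by simp
  qed
qed

definition pp :: "nat set \<Rightarrow> nat \<Rightarrow> real" where
  "pp B N = (\<Prod>b\<in>B \<inter> {..<N}. (1 - 1 / real b))"

lemma prod_sum_ineq:
  fixes x :: "nat \<Rightarrow> real"
  assumes "finite F" "\<forall>i\<in>F. 0 \<le> x i \<and> x i \<le> 1"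
  shows "(\<Prod>i\<in>F. (1 - x i)) * (1 + (\<Sum>i\<in>F. x i)) \<le> 1"
  using assms
proof (induction F rule: finite_induct)
  case empty
  then show ?case by simp
next
  case (insert a F)
  define P where "P = (\<Prod>i\<in>F. (1 - x i))"
  define T where "T = (\<Sum>i\<in>F. x i)"
  have IH: "P * (1 + T) \<le> 1" using insert by (simp add: P_def T_def)
  have P0: "0 \<le> P" unfolding P_def using insert.prems by (intro prod_nonneg) auto
  have T0: "0 \<le> T" unfolding T_def using insert.prems by (intro sum_nonneg) auto
  have xa: "0 \<le> x a" using insert.prems by auto
  have eq: "(1 - x a) * P * (1 + (x a + T)) = P * (1 + T) - P * x a * (T + x a)"
    by (simp add: algebra_simps)
  have "0 \<le> P * x a * (T + x a)" using P0 T0 xa by simp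
  then show ?case using insert IH eq by (simp add: P_def T_def)
qed

lemma pp_facts:
  assumes "0 \<notin> B"
  shows "decseq (pp B)" "\<And>N. 0 \<le> pp B N" "pp B \<longlonglongrightarrow> erdos_d B"
    "\<And>N. erdos_d B \<le> pp B N" "0 \<le> erdos_d B"
proof -
  have fac: "0 \<le> 1 - 1 / real b \<and> 1 - 1 / real b \<le> 1" if "b \<in> B" for b
  proof -
    have "b \<ge> 1" using that assms by (cases b) auto
    then show ?thesis by (simp add: field_simps)
  qed
  show nn: "0 \<le> pp B N" for N unfolding pp_def using fac by (intro prod_nonneg) auto
  show dec: "decseq (pp B)"
    unfolding decseq_Suc_iff
  proof
    fix N
    show "pp B (Suc N) \<le> pp B N"
    proof (cases "N \<in> B")
      case True
      then have "B \<inter> {..<Suc N} = insert N (B \<inter> {..<N})" by auto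
      then have "pp B (Suc N) = (1 - 1 / real N) * pp B N" unfolding pp_def by simp
      then show ?thesis using fac[OF True] nn[of N] by (simp add: mult_left_le_one_le)
    next
      case False
      then have "B \<inter> {..<Suc N} = B \<inter> {..<N}" by (auto simp: less_Suc_eq)
      then show ?thesis unfolding pp_def by simp
    qed
  qed
  obtain L where L: "pp B \<longlonglongrightarrow> L" "\<forall>i. L \<le> pp B i"
    using decseq_convergent[OF dec, of 0] nn by blast
  have "erdos_d B = L" unfolding erdos_d_def pp_def[symmetric] using L(1) by (rule limI)
  then show lim: "pp B \<longlonglongrightarrow> erdos_d B" using L by simp
  show "erdos_d B \<le> pp B N" for N using decseq_ge[OF dec lim] .
  show "0 \<le> erdos_d B" by (rule LIMSEQ_le_const[OF lim]) (use nn in auto)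
qed

lemma SB_le:
  assumes "0 \<notin> B" "summable (fB B)" "1/2 \<le> erdos_d B"
  shows "SB B \<le> 2 * (1 - erdos_d B)"
  unfolding SB_def
proof (rule suminf_le_const[OF assms(2)])
  fix N
  define d where "d = erdos_d B"
  define SN where "SN = sum (fB B) {..<N}"
  have "SN = (\<Sum>b\<in>B \<inter> {..<N}. 1 / real b)"
    unfolding SN_def fB_def using sum.inter_restrict[of "{..<N}" "\<lambda>b. 1 / real b" B]
    by (simp add: Int_commute)
  moreover have "pp B N * (1 + (\<Sum>b\<in>B \<inter> {..<N}. 1 / real b)) \<le> 1"
    unfolding pp_def
  proof (rule prod_sum_ineq)
    show "\<forall>i\<in>B \<inter> {..<N}. 0 \<le> 1 / real i \<and> 1 / real i \<le> 1"
    proof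
      fix i assume "i \<in> B \<inter> {..<N}"
      then have "i \<ge> 1" using assms by (cases i) auto
      then show "0 \<le> 1 / real i \<and> 1 / real i \<le> 1" by simp
    qed
  qed simp
  ultimately have p1: "pp B N * (1 + SN) \<le> 1" by simp
  have SN0: "0 \<le> SN" unfolding SN_def by (intro sum_nonneg) (simp add: fB_nonneg)
  have "d \<le> pp B N" unfolding d_def by (rule pp_facts(4)[OF assms(1)])
  then have "d * (1 + SN) \<le> pp B N * (1 + SN)" using SN0 by (intro mult_right_mono) auto
  with p1 have h1: "d + d * SN \<le> 1" by (simp add: algebra_simps)
  have h2: "SN / 2 \<le> d * SN" using assms(3) SN0 unfolding d_def[symmetric]
    by (metis mult.commute divide_inverse_commute mult_left_mono mult_1 inverse_eq_divide)
  from h1 h2 have "SN \<le> 2 * (1 - d)" by argo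
  then show "sum (fB B) {..<N} \<le> 2 * (1 - erdos_d B)" by (simp add: SN_def d_def)
qed

lemma m_facts:
  assumes "erdos_set B"
  shows "Inf B \<in> B" "1 \<le> Inf B" "1 / real (Inf B) \<le> 1 - erdos_d B"
proof -
  have B0: "0 \<notin> B" and inf: "infinite B" using assms by (auto simp: erdos_set_def)
  then have ne: "B \<noteq> {}" by auto
  show mB: "Inf B \<in> B" using Inf_nat_def1[OF ne] .
  show m1: "1 \<le> Inf B" using mB B0 by (cases "Inf B") auto
  have "B \<inter> {..<Inf B + 1} = {Inf B}"
  proof
    show "B \<inter> {..<Inf B + 1} \<subseteq> {Inf B}"
    proof
      fix b assume b: "b \<in> B \<inter> {..<Inf B + 1}"
      then have "Inf B \<le> b" by (intro cInf_lower) auto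
      then show "b \<in> {Inf B}" using b by auto
    qed
  qed (use mB in auto)
  then have "pp B (Inf B + 1) = 1 - 1 / real (Inf B)" unfolding pp_def by simp
  moreover have "erdos_d B \<le> pp B (Inf B + 1)" by (rule pp_facts(4)[OF B0])
  ultimately show "1 / real (Inf B) \<le> 1 - erdos_d B" by simp
qed

lemma Mmat_pos: "0 < Mmat \<phi> $ i $ j" by (simp add: Mmat_def)

lemma lam_facts: "0 < lam_plus \<phi>" "\<bar>lam_minus \<phi>\<bar> < lam_plus \<phi>"
proof -
  define a where "a = Mmat \<phi> $ 0 $ 0"
  define b where "b = Mmat \<phi> $ 0 $ 1"
  define c where "c = Mmat \<phi> $ 1 $ 0"
  define e where "e = Mmat \<phi> $ 1 $ 1"
  have pos: "0 < a" "0 < b" "0 < c" "0 < e" unfolding a_def b_def c_def e_def by (auto intro: Mmat_pos)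
  define t where "t = a + e"
  define s where "s = sqrt (t^2 - 4 * (a * e - b * c))"
  have "t^2 - 4 * (a * e - b * c) = (a - e)^2 + 4 * (b * c)" unfolding t_def by (simp add: power2_eq_square algebra_simps)
  moreover have "0 < (a - e)^2 + 4 * (b * c)" using pos by (simp add: add_nonneg_pos)
  ultimately have s0: "0 < s" unfolding s_def by simp
  have t0: "0 < t" using pos unfolding t_def by simp
  have lp: "lam_plus \<phi> = (t + s) / 2"
    unfolding lam_plus_def Let_def s_def t_def a_def b_def c_def e_def ..
  have lm: "lam_minus \<phi> = (t - s) / 2"
    unfolding lam_minus_def Let_def s_def t_def a_def b_def c_def e_def ..
  show "0 < lam_plus \<phi>" using lp s0 t0 by simp
  show "\<bar>lam_minus \<phi>\<bar> < lam_plus \<phi>" using lp lm s0 t0 by (simp add: abs_less_iff)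
qed

lemma kq_bound:
  fixes q :: real assumes "0 \<le> q" "q < 1"
  shows "real k * q ^ k \<le> 1 / (1 - q)"
proof -
  have "real k * q ^ k = (\<Sum>i<k. q ^ k)" by simp
  also have "\<dots> \<le> (\<Sum>i<k. q ^ i)" using assms by (intro sum_mono power_decreasing) auto
  also have "\<dots> = (1 - q ^ k) / (1 - q)" using assms by (simp add: sum_gp_strict)
  also have "\<dots> \<le> 1 / (1 - q)" using assms by (intro divide_right_mono) auto
  finally show ?thesis .
qed

lemma ln_bound: fixes x :: real assumes "\<bar>x\<bar> \<le> 1/2" shows "\<bar>ln (1 + x)\<bar> \<le> 2 * \<bar>x\<bar>"
proof -
  have "\<bar>ln (1 + x) - x\<bar> \<le> 2 * x^2" by (rule abs_ln_one_plus_x_minus_x_bound[OF assms])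
  moreover have "2 * x^2 \<le> \<bar>x\<bar>"
  proof -
    have "2 * x^2 = (2 * \<bar>x\<bar>) * \<bar>x\<bar>" by (simp add: power2_eq_square)
    also have "\<dots> \<le> 1 * \<bar>x\<bar>" using assms by (intro mult_right_mono) auto
    finally show ?thesis by simp
  qed
  ultimately show ?thesis by argo
qed

lemma geo_bound:
  fixes c r :: real assumes "\<bar>r\<bar> < 1"
  shows "\<exists>A\<ge>0. \<forall>k\<ge>1. \<bar>log 2 (1 + c * r ^ k)\<bar> \<le> A * \<bar>r\<bar> ^ k"
proof (cases "r = 0")
  case True
  show ?thesis
    by (rule exI[of _ 0]) (use True in \<open>auto simp: power_0_left\<close>)
next
  case False
  define q where "q = \<bar>r\<bar>"
  have q0: "0 < q" using False by (simp add: q_def)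
  define g where "g k = log 2 (1 + c * r ^ k)" for k :: nat
  have lim: "(\<lambda>k. c * r ^ k) \<longlonglongrightarrow> 0"
    using LIMSEQ_power_zero[of r] assms tendsto_mult_right_zero[of "\<lambda>k. r ^ k" sequentially c] by simp
  then obtain K where K: "\<forall>k\<ge>K. \<bar>c * r ^ k\<bar> < 1/2"
    unfolding LIMSEQ_iff by (metis diff_zero real_norm_def zero_less_divide_iff zero_less_numeral zero_less_one)
  define A where "A = 2 * \<bar>c\<bar> / ln 2 + (\<Sum>j<K. \<bar>g j\<bar> / q ^ j)"
  have s0: "0 \<le> (\<Sum>j<K. \<bar>g j\<bar> / q ^ j)" using q0 by (intro sum_nonneg) auto
  have A0: "0 \<le> A" unfolding A_def using s0 by simp
  have "\<bar>g k\<bar> \<le> A * q ^ k" for k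
  proof (cases "K \<le> k")
    case True
    have "\<bar>g k\<bar> = \<bar>ln (1 + c * r ^ k)\<bar> / ln 2" by (simp add: g_def log_def)
    also have "\<dots> \<le> 2 * \<bar>c * r ^ k\<bar> / ln 2"
      using ln_bound[of "c * r ^ k"] K True by (intro divide_right_mono) auto
    also have "\<dots> = 2 * \<bar>c\<bar> / ln 2 * q ^ k" by (simp add: q_def abs_mult power_abs)
    also have "\<dots> \<le> A * q ^ k" unfolding A_def using s0 q0 by (intro mult_right_mono) auto
    finally show ?thesis .
  next
    case False
    have "\<bar>g k\<bar> = \<bar>g k\<bar> / q ^ k * q ^ k" using q0 by simp
    also have "\<dots> \<le> (\<Sum>j<K. \<bar>g j\<bar> / q ^ j) * q ^ k"
      using False q0 by (intro mult_right_mono member_le_sum[where f="\<lambda>j. \<bar>g j\<bar> / q ^ j"]) auto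
    also have "\<dots> \<le> A * q ^ k" unfolding A_def using q0 by (intro mult_right_mono) auto
    finally show ?thesis .
  qed
  then show ?thesis using A0 unfolding g_def q_def by blast
qed

theorem theorem6p9:
  fixes \<phi> :: "bool \<Rightarrow> bool \<Rightarrow> real" and \<epsilon> :: real
  assumes "0 < \<epsilon>" and "\<epsilon> < 2"
  shows "\<exists>C>0. \<exists>\<delta>>0. \<forall>B. erdos_set B \<and> 1 - erdos_d B < \<delta> \<longrightarrow>
    \<bar>\<Sum>l\<in>{2..Inf B + 1}. measure (mirsky B) (cyl l) *
        log 2 (1 + snd (C00 \<phi>) / fst (C00 \<phi>) * (lam_minus \<phi> / lam_plus \<phi>) ^ (l - 1))\<bar>
      \<le> C * (1 - erdos_d B) powr \<epsilon>"
proof -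
  define c where "c = snd (C00 \<phi>) / fst (C00 \<phi>)"
  define r where "r = lam_minus \<phi> / lam_plus \<phi>"
  define q where "q = \<bar>r\<bar>"
  have q1: "q < 1" unfolding q_def r_def using lam_facts[of \<phi>] by (simp add: abs_div)
  have q0: "0 \<le> q" unfolding q_def by simp
  obtain A where A0: "0 \<le> A" and Ab: "\<forall>k\<ge>1. \<bar>log 2 (1 + c * r ^ k)\<bar> \<le> A * q ^ k"
    using geo_bound[of r c] q1 unfolding q_def by blast
  define C where "C = 5 * A / (1 - q) + 1"
  have C5: "0 \<le> 5 * A / (1 - q)" using A0 q1 by (intro divide_nonneg_nonneg) auto
  have C0: "0 < C" unfolding C_def using C5 by argo
  have main: "\<bar>\<Sum>l\<in>{2..Inf B + 1}. measure (mirsky B) (cyl l) * log 2 (1 + c * r ^ (l - 1))\<bar>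
      \<le> C * (1 - erdos_d B) powr \<epsilon>" if EB: "erdos_set B" and dB: "1 - erdos_d B < 1/2" for B
  proof -
    define d where "d = erdos_d B"
    define m where "m = Inf B"
    define S where "S = SB B"
    define P where "P l = measure (mirsky B) (cyl l)" for l
    define G where "G l = log 2 (1 + c * r ^ (l - 1))" for l
    have B0: "0 \<notin> B" using EB by (simp add: erdos_set_def)
    have sf: "summable (fB B)" using EB by (simp add: erdos_set_def fB_def[abs_def])
    have d0: "0 \<le> d" unfolding d_def by (rule pp_facts(5)[OF B0])
    have dh: "1/2 \<le> d" using dB unfolding d_def by simp
    have S2: "S \<le> 2 * (1 - d)" unfolding S_def d_def using SB_le[OF B0 sf] dh d_def by simp
    have S0: "0 \<le> S" unfolding S_def by (rule SB_nonneg[OF sf])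
    have mB: "m \<in> B" and m1: "1 \<le> m" and md: "1 / real m \<le> 1 - d"
      using m_facts[OF EB] unfolding m_def d_def by auto
    have mle: "m \<le> b" if "b \<in> B" for b unfolding m_def using that by (intro cInf_lower) auto
    have "0 < 1 / real m" using m1 by simp
    then have x0: "0 < 1 - d" using md by argo
    have x1: "1 - d \<le> 1" using d0 by simp
    have "\<bar>\<Sum>l\<in>{2..m + 1}. P l * G l\<bar> \<le> (\<Sum>l\<in>{2..m + 1}. \<bar>P l * G l\<bar>)" by (rule sum_abs)
    also have "\<dots> \<le> (\<Sum>l\<in>{2..m + 1}. (S * S + fB B (l - 1)) * (A * q ^ (l - 1)))"
    proof (rule sum_mono)
      fix l assume l: "l \<in> {2..m + 1}"
      have Pn: "0 \<le> P l" unfolding P_def by simp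
      have Pb: "P l \<le> S * S + fB B (l - 1)" unfolding P_def S_def
        using cyl_bound[OF EB, of l] l unfolding m_def by auto
      have Gb: "\<bar>G l\<bar> \<le> A * q ^ (l - 1)" unfolding G_def using Ab l by auto
      have "\<bar>P l * G l\<bar> = P l * \<bar>G l\<bar>" using Pn by (simp add: abs_mult)
      also have "\<dots> \<le> (S * S + fB B (l - 1)) * (A * q ^ (l - 1))"
        using Pn Pb Gb by (intro mult_mono) auto
      finally show "\<bar>P l * G l\<bar> \<le> (S * S + fB B (l - 1)) * (A * q ^ (l - 1))" .
    qed
    also have "\<dots> = (\<Sum>k\<in>{1..m}. (S * S + fB B k) * (A * q ^ k))"
    proof -
      have "{2..m + 1} = {Suc 1..Suc m}" by simp
      then show ?thesis by (simp only: sum.shift_bounds_cl_Suc_ivl) simp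
    qed
    also have "\<dots> = S * S * A * (\<Sum>k\<in>{1..m}. q ^ k) + A * (\<Sum>k\<in>{1..m}. fB B k * q ^ k)"
      by (simp add: sum.distrib sum_distrib_left algebra_simps)
    also have "\<dots> \<le> 4 * (1 - d)^2 * A * (1 / (1 - q)) + A * ((1 - d)^2 / (1 - q))"
    proof (rule add_mono)
      have g1: "(\<Sum>k\<in>{1..m}. q ^ k) \<le> 1 / (1 - q)"
      proof -
        have "(\<Sum>k\<in>{1..m}. q ^ k) \<le> (\<Sum>k<m+1. q ^ k)" using q0 by (intro sum_mono2) auto
        also have "\<dots> = (1 - q ^ (m+1)) / (1 - q)" using q1 sum_gp_strict[of q "m+1"] by (simp del: sum.lessThan_Suc)
        also have "\<dots> \<le> 1 / (1 - q)" using q0 q1 by (intro divide_right_mono) auto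
        finally show ?thesis .
      qed
      have SS: "S * S \<le> 4 * (1 - d)^2"
      proof -
        have "S * S \<le> (2 * (1 - d)) * (2 * (1 - d))" using S0 S2 by (intro mult_mono) auto
        moreover have "(2 * (1 - d)) * (2 * (1 - d)) = 4 * (1 - d)^2" by (simp add: power2_eq_square algebra_simps)
        ultimately show ?thesis by simp
      qed
      have "S * S * A * (\<Sum>k\<in>{1..m}. q ^ k) \<le> 4 * (1 - d)^2 * A * (1 / (1 - q))"
      proof (rule mult_mono)
        show "S * S * A \<le> 4 * (1 - d)^2 * A" by (rule mult_right_mono[OF SS A0])
        show "(\<Sum>k\<in>{1..m}. q ^ k) \<le> 1 / (1 - q)" by (rule g1)
        show "0 \<le> 4 * (1 - d)^2 * A" using A0 by simp
        show "0 \<le> (\<Sum>k\<in>{1..m}. q ^ k)" using q0 by (intro sum_nonneg) auto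
      qed
      then show "S * S * A * (\<Sum>k\<in>{1..m}. q ^ k) \<le> 4 * (1 - d)^2 * A * (1 / (1 - q))" .
      have "(\<Sum>k\<in>{1..m}. fB B k * q ^ k) = (\<Sum>k\<in>{1..m}. (if k = m then q ^ m / m else 0))"
      proof (rule sum.cong)
        fix k assume k: "k \<in> {1..m}"
        show "fB B k * q ^ k = (if k = m then q ^ m / m else 0)"
        proof (cases "k = m")
          case True then show ?thesis using mB by (simp add: fB_def)
        next
          case False
          then have "k \<notin> B" using k mle by force
          then show ?thesis using False by (simp add: fB_def)
        qed
      qed simp
      also have "\<dots> = q ^ m / m" using m1 by simp
      also have "\<dots> = (real m * q ^ m) * (1 / real m)^2" using m1 by (simp add: power2_eq_square)
      also have "\<dots> \<le> (1 / (1 - q)) * (1 - d)^2"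
      proof (rule mult_mono)
        show "real m * q ^ m \<le> 1 / (1 - q)" by (rule kq_bound[OF q0 q1])
        show "(1 / real m)^2 \<le> (1 - d)^2" using md m1 by (intro power_mono) auto
        show "0 \<le> 1 / (1 - q)" using q1 by simp
        show "0 \<le> (1 / real m)^2" by simp
      qed
      finally have "(\<Sum>k\<in>{1..m}. fB B k * q ^ k) \<le> (1 - d)^2 / (1 - q)" by simp
      then show "A * (\<Sum>k\<in>{1..m}. fB B k * q ^ k) \<le> A * ((1 - d)^2 / (1 - q))"
        using A0 by (intro mult_left_mono)
    qed
    also have "\<dots> = (5 * A / (1 - q)) * (1 - d)^2" by (simp add: field_simps)
    also have "\<dots> \<le> C * (1 - d)^2" unfolding C_def by (intro mult_right_mono) auto
    also have "\<dots> \<le> C * (1 - d) powr \<epsilon>"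
    proof -
      have "(1 - d)^2 = (1 - d) powr (real 2)" using x0 by (simp add: powr_realpow)
      also have "\<dots> \<le> (1 - d) powr \<epsilon>" using assms x0 x1 by (intro powr_mono') auto
      finally show ?thesis using C0 by (intro mult_left_mono) auto
    qed
    finally show ?thesis unfolding P_def G_def d_def m_def .
  qed
  show ?thesis
    by (rule exI[of _ C], rule conjI[OF C0], rule exI[of _ "1/2"]) (use main in \<open>auto simp: c_def r_def\<close>)
qed

end
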